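(* Let $u:V\to[0,1]$ and suppose $q^*\in\arg\max_{\|q\|_\infty\le1}\sum_{x\in V}u(x)(\mathrm{div}_wq)(x)$. For $\alpha\in(0,1]$ define $u^\alpha(x)=1$ if $u(x)\ge\alpha$ and $u^\alpha(x)=0$ otherwise. Then for almost every threshold level $\alpha\in(0,1]$, $q^*$ also satisfies $q^*\in\arg\max_{\|q\|_\infty\le1}\sum_{x\in V}u^\alpha(x)(\mathrm{div}_wq)(x)$.
   Context: Let $G=(V,E)$ be a finite undirected graph with symmetric weights $w(x,y)=w(y,x)>0$ for $\{x,y\}\in E$ and $w(x,y)=0$ otherwise. For $q:V\times V\to\mathbb{R}$, $(\mathrm{div}_wq)(x)=\frac12\sum_{y\in V}w(x,y)(q(x,y)-q(y,x))$ and $\|q\|_\infty=\max_{x,y\in V}|q(x,y)|$; the maximization is over all $q:V\times V\to\mathbb{R}$ with $\|q\|_\infty\le1$. *)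

theory Defs
  imports "HOL-Analysis.Analysis"
begin

definition div_w :: "('a::finite \<Rightarrow> 'a \<Rightarrow> real) \<Rightarrow> ('a \<Rightarrow> 'a \<Rightarrow> real) \<Rightarrow> 'a \<Rightarrow> real" where
  "div_w w q x = (1/2) * (\<Sum>y\<in>UNIV. w x y * (q x y - q y x))"

definition sup_norm :: "('a::finite \<Rightarrow> 'a \<Rightarrow> real) \<Rightarrow> real" where
  "sup_norm q = Max {\<bar>q x y\<bar> | x y. True}"

definition tv_objective :: "('a::finite \<Rightarrow> real) \<Rightarrow> ('a \<Rightarrow> 'a \<Rightarrow> real) \<Rightarrow> ('a \<Rightarrow> 'a \<Rightarrow> real) \<Rightarrow> real" where
  "tv_objective u w q = (\<Sum>x\<in>UNIV. u x * div_w w q x)"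

definition is_argmax :: "('a::finite \<Rightarrow> real) \<Rightarrow> ('a \<Rightarrow> 'a \<Rightarrow> real) \<Rightarrow> ('a \<Rightarrow> 'a \<Rightarrow> real) \<Rightarrow> bool" where
  "is_argmax u w q \<longleftrightarrow> sup_norm q \<le> 1 \<and>
     (\<forall>p. sup_norm p \<le> 1 \<longrightarrow> tv_objective u w p \<le> tv_objective u w q)"

definition threshold :: "('a \<Rightarrow> real) \<Rightarrow> real \<Rightarrow> 'a \<Rightarrow> real" where
  "threshold u \<alpha> x = (if u x \<ge> \<alpha> then 1 else 0)"

end

theory Submission
  imports Defs
begin

definition Lv :: "('a::finite \<Rightarrow> 'a \<Rightarrow> real) \<Rightarrow> ('a \<Rightarrow> real) \<Rightarrow> real" where
  "Lv w v = (1/2) * (\<Sum>x\<in>UNIV. \<Sum>y\<in>UNIV. w x y * \<bar>v x - v y\<bar>)"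

lemma obj_alt:
  fixes w :: "'a::finite \<Rightarrow> 'a \<Rightarrow> real"
  assumes ws: "\<forall>x y. w x y = w y x"
  shows "tv_objective v w p = (1/2) * (\<Sum>x\<in>UNIV. \<Sum>y\<in>UNIV. w x y * p x y * (v x - v y))"
proof -
  have "tv_objective v w p = (1/2) * ((\<Sum>x\<in>UNIV. \<Sum>y\<in>UNIV. w x y * v x * p x y)
        - (\<Sum>x\<in>UNIV. \<Sum>y\<in>UNIV. w x y * v x * p y x))"
    unfolding tv_objective_def div_w_def
    by (simp add: sum_distrib_left sum_subtractf[symmetric] algebra_simps)
  also have "(\<Sum>x\<in>UNIV. \<Sum>y\<in>UNIV. w x y * v x * p y x) = (\<Sum>x\<in>UNIV. \<Sum>y\<in>UNIV. w x y * v y * p x y)"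
    by (subst sum.swap) (simp add: ws)
  finally show ?thesis
    by (simp add: sum_subtractf[symmetric] algebra_simps)
qed

lemma sup_norm_le: "sup_norm (p::'a::finite \<Rightarrow> 'a \<Rightarrow> real) \<le> 1 \<Longrightarrow> \<bar>p x y\<bar> \<le> 1"
proof -
  assume a: "sup_norm p \<le> 1"
  have fin: "finite {\<bar>p x y\<bar> | x y. True}"
  proof -
    have "{\<bar>p x y\<bar> | x y. True} = (\<lambda>(x,y). \<bar>p x y\<bar>) ` UNIV" by auto
    then show ?thesis by simp
  qed
  have "\<bar>p x y\<bar> \<le> sup_norm p" unfolding sup_norm_def
    by (rule Max_ge[OF fin]) auto
  then show ?thesis using a by simp
qed

lemma sup_norm_leI: "(\<And>x y. \<bar>p x y\<bar> \<le> 1) \<Longrightarrow> sup_norm (p::'a::finite \<Rightarrow> 'a \<Rightarrow> real) \<le> 1"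
proof -
  assume a: "\<And>x y. \<bar>p x y\<bar> \<le> 1"
  have fin: "finite {\<bar>p x y\<bar> | x y. True}"
  proof -
    have "{\<bar>p x y\<bar> | x y. True} = (\<lambda>(x,y). \<bar>p x y\<bar>) ` UNIV" by auto
    then show ?thesis by simp
  qed
  show ?thesis unfolding sup_norm_def
    using fin a by (subst Max_le_iff) auto
qed

lemma obj_le:
  fixes w :: "'a::finite \<Rightarrow> 'a \<Rightarrow> real"
  assumes ws: "\<forall>x y. w x y = w y x" and wn: "\<forall>x y. w x y \<ge> 0" and p: "sup_norm p \<le> 1"
  shows "tv_objective v w p \<le> Lv w v"
  unfolding obj_alt[OF ws] Lv_def
proof -
  have "\<And>x y. w x y * p x y * (v x - v y) \<le> w x y * \<bar>v x - v y\<bar>"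
  proof -
    fix x y
    have "p x y * (v x - v y) \<le> \<bar>p x y * (v x - v y)\<bar>" by simp
    also have "\<dots> \<le> \<bar>v x - v y\<bar>" using sup_norm_le[OF p, of x y]
      by (simp add: abs_mult mult_left_le_one_le)
    finally show "w x y * p x y * (v x - v y) \<le> w x y * \<bar>v x - v y\<bar>"
      using wn by (metis mult.assoc mult_left_mono)
  qed
  then show "1 / 2 * (\<Sum>x\<in>UNIV. \<Sum>y\<in>UNIV. w x y * p x y * (v x - v y))
    \<le> 1 / 2 * (\<Sum>x\<in>UNIV. \<Sum>y\<in>UNIV. w x y * \<bar>v x - v y\<bar>)"
    by (intro mult_left_mono sum_mono) auto
qed

lemma obj_attain:
  fixes w :: "'a::finite \<Rightarrow> 'a \<Rightarrow> real"
  assumes ws: "\<forall>x y. w x y = w y x"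
  shows "tv_objective v w (\<lambda>x y. sgn (v x - v y)) = Lv w v"
    "sup_norm (\<lambda>x y. sgn (v x - v y)) \<le> 1"
proof -
  have k: "\<And>t::real. sgn t * t = \<bar>t\<bar>" by (simp add: abs_if sgn_if)
  show "tv_objective v w (\<lambda>x y. sgn (v x - v y)) = Lv w v"
    unfolding obj_alt[OF ws] Lv_def by (simp add: mult.assoc k)
  show "sup_norm (\<lambda>x y. sgn (v x - v y)) \<le> 1"
    by (rule sup_norm_leI) (simp add: abs_sgn_eq)
qed

lemma argmax_iff:
  fixes w :: "'a::finite \<Rightarrow> 'a \<Rightarrow> real"
  assumes ws: "\<forall>x y. w x y = w y x" and wn: "\<forall>x y. w x y \<ge> 0"
  shows "is_argmax v w q \<longleftrightarrow> sup_norm q \<le> 1 \<and> tv_objective v w q = Lv w v"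
  unfolding is_argmax_def
  using obj_le[OF ws wn] obj_attain[OF ws, of v]
  by (metis order_antisym)

lemma abs_split: "\<bar>(s::real) - t\<bar> = \<bar>min s b - min t b\<bar> + \<bar>(s - min s b) - (t - min t b)\<bar>"
  by (auto simp: min_def abs_if)

lemma decomp:
  fixes w :: "'a::finite \<Rightarrow> 'a \<Rightarrow> real"
  assumes ws: "\<forall>x y. w x y = w y x" and wn: "\<forall>x y. w x y \<ge> 0"
    and qm: "is_argmax v w q"
  shows "is_argmax (\<lambda>x. min (v x) b) w q" "is_argmax (\<lambda>x. v x - min (v x) b) w q"
proof -
  let ?a = "\<lambda>x. min (v x) b" and ?c = "\<lambda>x. v x - min (v x) b"
  have L: "Lv w v = Lv w ?a + Lv w ?c"
    unfolding Lv_def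
    by (subst abs_split[of _ _ b]) (simp add: distrib_left sum.distrib)
  have O: "tv_objective v w q = tv_objective ?a w q + tv_objective ?c w q"
    unfolding tv_objective_def by (simp add: sum.distrib[symmetric] algebra_simps)
  have qn: "sup_norm q \<le> 1" and e: "tv_objective v w q = Lv w v"
    using qm argmax_iff[OF ws wn] by auto
  have "tv_objective ?a w q \<le> Lv w ?a" "tv_objective ?c w q \<le> Lv w ?c"
    using obj_le[OF ws wn qn] by auto
  then have "tv_objective ?a w q = Lv w ?a" "tv_objective ?c w q = Lv w ?c"
    using L O e by linarith+
  then show "is_argmax ?a w q" "is_argmax ?c w q"
    using argmax_iff[OF ws wn] qn by auto
qed

lemma scale:
  fixes w :: "'a::finite \<Rightarrow> 'a \<Rightarrow> real"
  assumes ws: "\<forall>x y. w x y = w y x" and wn: "\<forall>x y. w x y \<ge> 0"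
    and qm: "is_argmax (\<lambda>x. c * v x) w q" and c: "c > 0"
  shows "is_argmax v w q"
proof -
  have O: "tv_objective (\<lambda>x. c * v x) w q = c * tv_objective v w q"
    unfolding tv_objective_def by (simp add: sum_distrib_left algebra_simps)
  have L: "Lv w (\<lambda>x. c * v x) = c * Lv w v"
    unfolding Lv_def
  proof -
    have "\<And>x y. \<bar>c * v x - c * v y\<bar> = c * \<bar>v x - v y\<bar>"
      using c by (simp add: right_diff_distrib[symmetric] abs_mult)
    then show "1 / 2 * (\<Sum>x\<in>UNIV. \<Sum>y\<in>UNIV. w x y * \<bar>c * v x - c * v y\<bar>) =
      c * (1 / 2 * (\<Sum>x\<in>UNIV. \<Sum>y\<in>UNIV. w x y * \<bar>v x - v y\<bar>))"
      by (simp add: sum_distrib_left algebra_simps)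
  qed
  show ?thesis using qm c O L argmax_iff[OF ws wn] by auto
qed

lemma main_pt:
  fixes w :: "'a::finite \<Rightarrow> 'a \<Rightarrow> real"
  assumes ws: "\<forall>x y. w x y = w y x" and wn: "\<forall>x y. w x y \<ge> 0"
    and qm: "is_argmax u w q" and na: "\<alpha> \<notin> range u"
  shows "is_argmax (threshold u \<alpha>) w q"
proof -
  define S where "S = {u x | x. u x < \<alpha>}"
  have finS: "finite S" unfolding S_def
  proof -
    have "{u x | x. u x < \<alpha>} \<subseteq> range u" by auto
    moreover have "finite (range u)" by simp
    ultimately show "finite {u x | x. u x < \<alpha>}" by (rule finite_subset)
  qed
  define e where "e = (if S = {} then 1 else \<alpha> - Max S)"
  have epos: "e > 0"
  proof (cases "S = {}")
    case True then show ?thesis by (simp add: e_def)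
  next
    case False
    have "Max S \<in> S" using Max_in[OF finS False] .
    then have "Max S < \<alpha>" unfolding S_def by auto
    then show ?thesis using False by (simp add: e_def)
  qed
  have gap: "\<And>x. u x < \<alpha> \<Longrightarrow> u x \<le> \<alpha> - e"
  proof -
    fix x assume h: "u x < \<alpha>"
    then have s: "u x \<in> S" "S \<noteq> {}" unfolding S_def by auto
    then show "u x \<le> \<alpha> - e" using Max_ge[OF finS s(1)] by (simp add: e_def)
  qed
  have g1: "is_argmax (\<lambda>x. min (u x) \<alpha>) w q" using decomp(1)[OF ws wn qm] .
  have g2: "is_argmax (\<lambda>x. min (u x) \<alpha> - min (min (u x) \<alpha>) (\<alpha> - e)) w q"
    using decomp(2)[OF ws wn g1] .
  have eq: "(\<lambda>x. min (u x) \<alpha> - min (min (u x) \<alpha>) (\<alpha> - e)) = (\<lambda>x. e * threshold u \<alpha> x)"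
  proof
    fix x
    show "min (u x) \<alpha> - min (min (u x) \<alpha>) (\<alpha> - e) = e * threshold u \<alpha> x"
    proof (cases "u x \<ge> \<alpha>")
      case True then show ?thesis using epos by (simp add: threshold_def min_def)
    next
      case False
      then have "u x \<le> \<alpha> - e" using gap by simp
      then show ?thesis using False by (simp add: threshold_def min_def)
    qed
  qed
  from g2 have "is_argmax (\<lambda>x. e * threshold u \<alpha> x) w q" by (simp only: eq)
  then show ?thesis using scale[OF ws wn _ epos] by blast
qed

theorem lemma1:
  fixes E :: "('a::finite \<times> 'a) set"
    and w :: "'a \<Rightarrow> 'a \<Rightarrow> real"
    and u :: "'a \<Rightarrow> real"
    and q :: "'a \<Rightarrow> 'a \<Rightarrow> real"
  assumes E_sym: "sym E"
    and w_sym: "\<forall>x y. w x y = w y x"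
    and w_pos: "\<forall>x y. (x, y) \<in> E \<longrightarrow> w x y > 0"
    and w_zero: "\<forall>x y. (x, y) \<notin> E \<longrightarrow> w x y = 0"
    and u_range: "\<forall>x. 0 \<le> u x \<and> u x \<le> 1"
    and q_max: "is_argmax u w q"
  shows "AE \<alpha> in lborel. \<alpha> \<in> {0<..1} \<longrightarrow> is_argmax (threshold u \<alpha>) w q"
proof -
  have wn: "\<forall>x y. w x y \<ge> 0"
    using w_pos w_zero by (metis less_eq_real_def)
  have "AE \<alpha> in lborel. \<alpha> \<notin> range u"
    by (intro AE_not_in finite_imp_null_set_lborel) simp
  then show ?thesis
    by eventually_elim (simp add: main_pt[OF w_sym wn q_max])
qed

end
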